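(* Let $H$ be a complex Hilbert space, let $A$ be a closed symmetric operator in $H$ (its domain $D(A)$ need not be dense) which is invertible, i.e. injective, and let $z\in\mathbb{C}\setminus\mathbb{R}$ be fixed. Let $T$ be a non-expanding linear operator ($\|T\psi\|_H\le\|\psi\|_H$) with $D(T)\subseteq\mathcal{N}_z(A)$, $R(T)\subseteq\mathcal{N}_{\overline{z}}(A)$, which is $z$-admissible with respect to $A$. Let $B$ be the operator defined by $$D(B)=D(A)\dotplus (T-E_H)D(T),\qquad B(f+T\psi-\psi)=Af+zT\psi-\overline{z}\psi,\quad f\in D(A),\ \psi\in D(T).$$ Then the following two conditions are equivalent: (i) the operator $B$ is invertible (injective); (ii) the operator $\frac{z}{\overline{z}}T$ is $\frac{1}{z}$-admissible with respect to the operator $A^{-1}$.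
   Context: $E_H$ is the identity operator on $H$. For a closed symmetric operator $S$ in $H$ and $\lambda\in\mathbb{C}\setminus\mathbb{R}$, set $\mathcal{M}_\lambda(S)=(S-\lambda E_H)D(S)$ and $\mathcal{N}_\lambda(S)=H\ominus\mathcal{M}_\lambda(S)$ (the defect subspace). Note that $A^{-1}$ (with domain $R(A)$) is a closed symmetric operator and $\mathcal{N}_\lambda(A)=\mathcal{N}_{1/\lambda}(A^{-1})$, so $\frac{z}{\overline z}T$ acts from $\mathcal{N}_{1/z}(A^{-1})$ to $\mathcal{N}_{1/\overline{z}}(A^{-1})$. The forbidden operator $X_\lambda(S)$ is the (well-defined) operator with domain $D(X_\lambda(S))=P^H_{\mathcal{N}_\lambda(S)}\big(H\ominus\overline{D(S)}\big)$ given by $X_\lambda(S)P^H_{\mathcal{N}_\lambda(S)}g=P^H_{\mathcal{N}_{\overline{\lambda}}(S)}g$ for $g\in H\ominus\overline{D(S)}$, where $P^H_{M}$ denotes the orthogonal projection onto a subspace $M$. A linear operator $C$ with $D(C)\subseteq\mathcal{N}_\lambda(S)$, $R(C)\subseteq\mathcal{N}_{\overline\lambda}(S)$ is called $\lambda$-admissible with respect to $S$ if there is no nonzero $\psi\in D(C)\cap D(X_\lambda(S))$ with $C\psi=X_\lambda(S)\psi$ (equivalently, $C-X_\lambda(S)$ is injective). *)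

theory Defs
  imports "HOL-Analysis.Analysis"
begin

text \<open>HOL-Analysis has no complex vector spaces / complex inner products, so we
introduce a type class of complex Hilbert spaces: a real Banach space carrying a
compatible complex scalar multiplication and a complex inner product (linear in
the first argument, conjugate symmetric) inducing the norm.\<close>

class chilbert = banach +
  fixes cscale :: "complex \<Rightarrow> 'a \<Rightarrow> 'a" (infixr "*\<^sub>C" 75)
    and cinner :: "'a \<Rightarrow> 'a \<Rightarrow> complex"
  assumes cscale_of_real: "cscale (complex_of_real r) x = scaleR r x"
    and cscale_add_left: "cscale (a + b) x = cscale a x + cscale b x"
    and cscale_add_right: "cscale a (x + y) = cscale a x + cscale a y"
    and cscale_mult: "cscale (a * b) x = cscale a (cscale b x)"
    and cinner_commute: "cinner x y = cnj (cinner y x)"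
    and cinner_add_left: "cinner (x + y) z = cinner x z + cinner y z"
    and cinner_scale_left: "cinner (cscale a x) y = a * cinner x y"
    and cinner_norm: "cinner x x = complex_of_real ((norm x)\<^sup>2)"

definition csubspace :: "'h::chilbert set \<Rightarrow> bool" where
  "csubspace S \<longleftrightarrow> 0 \<in> S \<and> (\<forall>x\<in>S. \<forall>y\<in>S. x + y \<in> S) \<and> (\<forall>a. \<forall>x\<in>S. a *\<^sub>C x \<in> S)"

definition orth_compl :: "'h::chilbert set \<Rightarrow> 'h set" where
  "orth_compl S = {y. \<forall>x\<in>S. cinner x y = 0}"

definition proj :: "'h::chilbert set \<Rightarrow> 'h \<Rightarrow> 'h" where
  "proj M g = (THE p. p \<in> M \<and> (\<forall>m\<in>M. cinner (g - p) m = 0))"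

definition lin_op :: "'h::chilbert set \<Rightarrow> ('h \<Rightarrow> 'h) \<Rightarrow> bool" where
  "lin_op D S \<longleftrightarrow> csubspace D \<and> (\<forall>x\<in>D. \<forall>y\<in>D. S (x + y) = S x + S y)
                 \<and> (\<forall>a. \<forall>x\<in>D. S (a *\<^sub>C x) = a *\<^sub>C S x)"

definition closed_op :: "'h::chilbert set \<Rightarrow> ('h \<Rightarrow> 'h) \<Rightarrow> bool" where
  "closed_op D S \<longleftrightarrow> closed {(x, S x) | x. x \<in> D}"

definition symmetric_op :: "'h::chilbert set \<Rightarrow> ('h \<Rightarrow> 'h) \<Rightarrow> bool" where
  "symmetric_op D S \<longleftrightarrow> lin_op D S \<and> (\<forall>x\<in>D. \<forall>y\<in>D. cinner (S x) y = cinner x (S y))"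

definition closed_symmetric :: "'h::chilbert set \<Rightarrow> ('h \<Rightarrow> 'h) \<Rightarrow> bool" where
  "closed_symmetric D S \<longleftrightarrow> symmetric_op D S \<and> closed_op D S"

text \<open>Inverse operator, with domain the range \<open>S ` D\<close>.\<close>
definition inv_op :: "'h::chilbert set \<Rightarrow> ('h \<Rightarrow> 'h) \<Rightarrow> 'h \<Rightarrow> 'h" where
  "inv_op D S y = (THE x. x \<in> D \<and> S x = y)"

definition M_sp :: "complex \<Rightarrow> 'h::chilbert set \<Rightarrow> ('h \<Rightarrow> 'h) \<Rightarrow> 'h set" where
  "M_sp l D S = (\<lambda>x. S x - l *\<^sub>C x) ` D"

definition N_sp :: "complex \<Rightarrow> 'h::chilbert set \<Rightarrow> ('h \<Rightarrow> 'h) \<Rightarrow> 'h set" where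
  "N_sp l D S = orth_compl (M_sp l D S)"

definition forbidden_dom :: "complex \<Rightarrow> 'h::chilbert set \<Rightarrow> ('h \<Rightarrow> 'h) \<Rightarrow> 'h set" where
  "forbidden_dom l D S = proj (N_sp l D S) ` orth_compl (closure D)"

definition forbidden_op :: "complex \<Rightarrow> 'h::chilbert set \<Rightarrow> ('h \<Rightarrow> 'h) \<Rightarrow> 'h \<Rightarrow> 'h" where
  "forbidden_op l D S \<psi> =
     (SOME y. \<exists>g \<in> orth_compl (closure D).
                 \<psi> = proj (N_sp l D S) g \<and> y = proj (N_sp (cnj l) D S) g)"

definition admissible ::
  "complex \<Rightarrow> 'h::chilbert set \<Rightarrow> ('h \<Rightarrow> 'h) \<Rightarrow> 'h set \<Rightarrow> ('h \<Rightarrow> 'h) \<Rightarrow> bool" where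
  "admissible l D S DC C \<longleftrightarrow>
     lin_op DC C \<and> DC \<subseteq> N_sp l D S \<and> C ` DC \<subseteq> N_sp (cnj l) D S \<and>
     \<not> (\<exists>\<psi>. \<psi> \<noteq> 0 \<and> \<psi> \<in> DC \<and> \<psi> \<in> forbidden_dom l D S \<and> C \<psi> = forbidden_op l D S \<psi>)"

definition ext_dom :: "'h::chilbert set \<Rightarrow> 'h set \<Rightarrow> ('h \<Rightarrow> 'h) \<Rightarrow> 'h set" where
  "ext_dom DA DT T = {f + T \<psi> - \<psi> | f \<psi>. f \<in> DA \<and> \<psi> \<in> DT}"

definition ext_op :: "complex \<Rightarrow> 'h::chilbert set \<Rightarrow> ('h \<Rightarrow> 'h) \<Rightarrow> 'h set \<Rightarrow> ('h \<Rightarrow> 'h) \<Rightarrow> 'h \<Rightarrow> 'h" where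
  "ext_op z DA A DT T x =
     (SOME y. \<exists>f\<in>DA. \<exists>\<psi>\<in>DT. x = f + T \<psi> - \<psi> \<and> y = A f + z *\<^sub>C T \<psi> - cnj z *\<^sub>C \<psi>)"

end

theory Submission
  imports Defs
begin

lemma cscale_zero_right[simp]: "a *\<^sub>C (0::'a::chilbert) = 0"
  using cscale_add_right[of a "0::'a" 0] by simp

lemma cscale_zero_left[simp]: "0 *\<^sub>C (x::'a::chilbert) = 0"
  using cscale_of_real[of 0 x] by simp

lemma cscale_one[simp]: "1 *\<^sub>C (x::'a::chilbert) = x"
  using cscale_of_real[of 1 x] by simp

lemma cscale_minus_right: "a *\<^sub>C (- x) = - (a *\<^sub>C (x::'a::chilbert))"
  using cscale_add_right[of a x "-x"] by (simp add: eq_neg_iff_add_eq_0 add.commute)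

lemma cscale_diff_right: "a *\<^sub>C (x - y) = a *\<^sub>C x - a *\<^sub>C (y::'a::chilbert)"
  using cscale_add_right[of a x "-y"] by (simp add: cscale_minus_right)

lemma cscale_minus_left: "(- a) *\<^sub>C x = - (a *\<^sub>C (x::'a::chilbert))"
  using cscale_add_left[of "-a" a x] by (simp add: eq_neg_iff_add_eq_0 add.commute)

lemma cscale_diff_left: "(a - b) *\<^sub>C x = a *\<^sub>C x - b *\<^sub>C (x::'a::chilbert)"
  using cscale_add_left[of a "-b" x] by (simp add: cscale_minus_left)

lemma cscale_cscale[simp]: "a *\<^sub>C b *\<^sub>C x = (a * b) *\<^sub>C (x::'a::chilbert)"
  by (simp add: cscale_mult)

lemma scaleR_cscale: "r *\<^sub>R x = complex_of_real r *\<^sub>C (x::'a::chilbert)"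
  by (simp add: cscale_of_real)

lemma cscale_eq_0_iff[simp]: "a *\<^sub>C x = 0 \<longleftrightarrow> a = 0 \<or> (x::'a::chilbert) = 0"
proof
  assume h: "a *\<^sub>C x = 0"
  show "a = 0 \<or> x = 0"
  proof (cases "a = 0")
    case False
    then have "x = (inverse a * a) *\<^sub>C x" by simp
    also have "\<dots> = 0" using h by (simp flip: cscale_cscale)
    finally show ?thesis by simp
  qed simp
qed auto

lemma cinner_add_right: "cinner x (y + z) = cinner x y + cinner x (z::'a::chilbert)"
  by (metis cinner_add_left cinner_commute complex_cnj_add)

lemma cinner_scale_right: "cinner x (a *\<^sub>C y) = cnj a * cinner x (y::'a::chilbert)"
  by (metis cinner_commute cinner_scale_left complex_cnj_cnj complex_cnj_mult)

lemma cinner_zero_left[simp]: "cinner 0 (y::'a::chilbert) = 0"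
  using cinner_add_left[of 0 0 y] by simp

lemma cinner_zero_right[simp]: "cinner x (0::'a::chilbert) = 0"
  using cinner_add_right[of x 0 0] by simp

lemma cinner_minus_left: "cinner (- x) y = - cinner x (y::'a::chilbert)"
  using cinner_add_left[of x "-x" y] by (simp add: eq_neg_iff_add_eq_0 add.commute)

lemma cinner_minus_right: "cinner x (- y) = - cinner x (y::'a::chilbert)"
  using cinner_add_right[of x y "-y"] by (simp add: eq_neg_iff_add_eq_0 add.commute)

lemma cinner_diff_left: "cinner (x - y) z = cinner x z - cinner y (z::'a::chilbert)"
  using cinner_add_left[of x "-y" z] by (simp add: cinner_minus_left)

lemma cinner_diff_right: "cinner x (y - z) = cinner x y - cinner x (z::'a::chilbert)"
  using cinner_add_right[of x y "-z"] by (simp add: cinner_minus_right)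

lemmas cinner_simps = cinner_add_left cinner_add_right cinner_diff_left cinner_diff_right
  cinner_minus_left cinner_minus_right cinner_scale_left cinner_scale_right

lemma cinner_self_eq_0[simp]: "cinner x x = 0 \<longleftrightarrow> (x::'a::chilbert) = 0"
  by (simp add: cinner_norm)

lemma cinner_sym0: "cinner x y = 0 \<longleftrightarrow> cinner y (x::'a::chilbert) = 0"
  by (metis cinner_commute complex_cnj_zero_iff)

lemma norm_cscale: "norm (a *\<^sub>C x) = cmod a * norm (x::'a::chilbert)"
proof -
  have "cinner (a *\<^sub>C x) (a *\<^sub>C x) = (a * cnj a) * cinner x x"
    by (simp add: cinner_scale_left cinner_scale_right mult.assoc)
  then have "complex_of_real ((norm (a *\<^sub>C x))\<^sup>2) = complex_of_real ((cmod a)\<^sup>2) * complex_of_real ((norm x)\<^sup>2)"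
    by (simp only: cinner_norm complex_norm_square)
  then have "(norm (a *\<^sub>C x))\<^sup>2 = (cmod a * norm x)\<^sup>2"
    by (metis of_real_eq_iff of_real_mult power_mult_distrib)
  then show ?thesis by (simp add: power2_eq_iff_nonneg)
qed

lemma norm_add_sq: "(norm (x + y))\<^sup>2 = (norm x)\<^sup>2 + (norm y)\<^sup>2 + 2 * Re (cinner x (y::'a::chilbert))"
proof -
  have "cinner (x+y) (x+y) = cinner x x + cinner y y + (cinner x y + cnj (cinner x y))"
    by (simp add: cinner_simps cinner_commute[of y x])
  then have "Re (cinner (x+y) (x+y)) = Re (cinner x x) + Re (cinner y y) + 2 * Re (cinner x y)"
    by (simp add: complex_add_cnj)
  then show ?thesis by (simp add: cinner_norm del: of_real_power)
qed

lemma Re_cinner_self: "Re (cinner x x) = (norm (x::'a::chilbert))\<^sup>2"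
  by (simp add: cinner_norm)

lemma cauchy_schwarz: "cmod (cinner x y) \<le> norm x * norm (y::'a::chilbert)"
proof (cases "y = 0")
  case True then show ?thesis by simp
next
  case False
  define n where "n = (norm y)\<^sup>2"
  have n: "n > 0" using False by (simp add: n_def)
  define c where "c = cinner x y"
  define t where "t = c / complex_of_real n"
  have "0 \<le> (norm (x - t *\<^sub>C y))\<^sup>2" by simp
  also have "\<dots> = Re (cinner (x - t *\<^sub>C y) (x - t *\<^sub>C y))" by (simp add: cinner_norm del: of_real_power)
  also have "cinner (x - t *\<^sub>C y) (x - t *\<^sub>C y) = cinner x x - cnj t * c - t * cnj c + t * cnj t * cinner y y"
    by (simp add: cinner_simps c_def cinner_commute[of y x] algebra_simps)
  also have "cinner y y = complex_of_real n" by (simp add: cinner_norm n_def del: of_real_power)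
  also have "cinner x x - cnj t * c - t * cnj c + t * cnj t * complex_of_real n = cinner x x - c * cnj c / complex_of_real n"
    using n by (simp add: t_def field_simps)
  also have "\<dots> = complex_of_real ((norm x)\<^sup>2 - (cmod c)\<^sup>2 / n)"
    by (simp add: cinner_norm complex_norm_square del: of_real_power)
  finally have "0 \<le> (norm x)\<^sup>2 - (cmod c)\<^sup>2 / n" by simp
  then have "(cmod c)\<^sup>2 \<le> (norm x * norm y)\<^sup>2" using n by (simp add: field_simps n_def power_mult_distrib)
  then show ?thesis unfolding c_def by (simp add: power2_le_iff_abs_le)
qed


lemma bl_cinner_left: "bounded_linear (\<lambda>x. cinner x (y::'a::chilbert))"
  apply (rule bounded_linear_intro[where K="norm y"])
    apply (simp add: cinner_add_left)
   apply (simp add: scaleR_cscale cinner_scale_left scaleR_conv_of_real)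
  apply (simp add: cauchy_schwarz)
  done

lemma bl_cinner_right: "bounded_linear (\<lambda>y. cinner (x::'a::chilbert) y)"
  apply (rule bounded_linear_intro[where K="norm x"])
    apply (simp add: cinner_add_right)
   apply (simp add: scaleR_cscale cinner_scale_right scaleR_conv_of_real)
  apply (metis cauchy_schwarz mult.commute)
  done

lemma bl_cscale: "bounded_linear (\<lambda>x. a *\<^sub>C (x::'a::chilbert))"
  apply (rule bounded_linear_intro[where K="cmod a"])
    apply (simp add: cscale_add_right)
   apply (simp add: scaleR_cscale mult.commute)
  apply (simp add: norm_cscale mult.commute)
  done

lemma closed_cinner_zero: "closed {x. cinner x (y::'a::chilbert) = 0}"
  using closed_Collect_eq[of "\<lambda>x. cinner x y" "\<lambda>_. 0"]
    linear_continuous_on[OF bl_cinner_left] by auto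

lemma closed_cinner_zero': "closed {y. cinner (x::'a::chilbert) y = 0}"
  using closed_Collect_eq[of "\<lambda>y. cinner x y" "\<lambda>_. 0"]
    linear_continuous_on[OF bl_cinner_right] by auto

lemma closed_orth_compl: "closed (orth_compl (S::'a::chilbert set))"
proof -
  have "orth_compl S = (\<Inter>x\<in>S. {y. cinner x y = 0})" by (auto simp: orth_compl_def)
  then show ?thesis using closed_cinner_zero' by auto
qed

lemma orth_compl_closure: "orth_compl (closure (S::'a::chilbert set)) = orth_compl S"
proof
  show "orth_compl (closure S) \<subseteq> orth_compl S"
    using closure_subset by (auto simp: orth_compl_def)
  show "orth_compl S \<subseteq> orth_compl (closure S)"
  proof
    fix y assume y: "y \<in> orth_compl S"
    have "S \<subseteq> {x. cinner x y = 0}" using y by (auto simp: orth_compl_def)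
    then have "closure S \<subseteq> {x. cinner x y = 0}"
      using closure_minimal closed_cinner_zero by blast
    then show "y \<in> orth_compl (closure S)" by (auto simp: orth_compl_def)
  qed
qed

lemma csubspace_minus: "csubspace S \<Longrightarrow> x \<in> S \<Longrightarrow> - x \<in> S"
  unfolding csubspace_def by (metis cscale_minus_left cscale_one)

lemma csubspace_diff: "csubspace S \<Longrightarrow> x \<in> S \<Longrightarrow> y \<in> S \<Longrightarrow> x - y \<in> S"
  using csubspace_minus[of S y] unfolding csubspace_def by (metis diff_conv_add_uminus)

lemma csubspace_orth_compl: "csubspace (orth_compl (S::'a::chilbert set))"
  unfolding csubspace_def orth_compl_def by (auto simp: cinner_add_right cinner_scale_right)

lemma proj_unique:
  assumes M: "csubspace M" and p: "p \<in> M" and orth: "\<forall>m\<in>M. cinner (g - p) m = 0"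
  shows "proj M g = p"
  unfolding proj_def
proof (rule the_equality)
  show "p \<in> M \<and> (\<forall>m\<in>M. cinner (g - p) m = 0)" using p orth by blast
  fix q assume q: "q \<in> M \<and> (\<forall>m\<in>M. cinner (g - q) m = 0)"
  have pq: "p - q \<in> M" using csubspace_diff[OF M] p q by blast
  have "cinner (p - q) (p - q) = cinner (g - q) (p - q) - cinner (g - p) (p - q)"
    by (simp add: cinner_diff_left)
  also have "\<dots> = 0" using q orth pq by simp
  finally show "q = p" by simp
qed

lemma parallelogram:
  "(norm (a - b))\<^sup>2 = 2 * (norm a)\<^sup>2 + 2 * (norm b)\<^sup>2 - (norm (a + (b::'a::chilbert)))\<^sup>2"
  using norm_add_sq[of a b] norm_add_sq[of a "-b"] by (simp add: cinner_minus_right)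

lemma proj_exists:
  fixes M :: "'a::chilbert set"
  assumes M: "csubspace M" and cl: "closed M"
  shows "\<exists>p\<in>M. \<forall>m\<in>M. cinner (g - p) m = 0"
proof -
  define D where "D = (\<lambda>m. (norm (g - m))\<^sup>2) ` M"
  define d where "d = Inf D"
  have M0: "0 \<in> M" using M by (simp add: csubspace_def)
  have Dne: "D \<noteq> {}" using M0 by (auto simp: D_def)
  have Dbdd: "bdd_below D" unfolding D_def by (rule bdd_belowI[of _ 0]) auto
  have dle: "d \<le> (norm (g - m))\<^sup>2" if "m \<in> M" for m
    unfolding d_def using cInf_lower[OF _ Dbdd] that by (auto simp: D_def)
  have "\<exists>m\<in>M. (norm (g - m))\<^sup>2 < d + inverse (real (Suc n))" for n
  proof -
    have "Inf D < d + inverse (real (Suc n))" by (simp add: d_def)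
    then show ?thesis using cInf_less_iff[OF Dne Dbdd] by (auto simp: D_def)
  qed
  then obtain ms where ms: "\<And>n. ms n \<in> M" "\<And>n. (norm (g - ms n))\<^sup>2 < d + inverse (real (Suc n))"
    by metis
  have half: "(1/2::real) *\<^sub>R (a + b) \<in> M" if "a \<in> M" "b \<in> M" for a b
    using M that unfolding csubspace_def scaleR_cscale by blast
  have bound: "(norm (ms k - ms n))\<^sup>2 \<le> 2 * inverse (real (Suc n)) + 2 * inverse (real (Suc k))" for n k
  proof -
    define a where "a = g - ms n"
    define b where "b = g - ms k"
    have "a + b = 2 *\<^sub>R (g - (1/2::real) *\<^sub>R (ms n + ms k))"
      by (simp add: a_def b_def algebra_simps scaleR_2)
    then have "(norm (a + b))\<^sup>2 = 4 * (norm (g - (1/2::real) *\<^sub>R (ms n + ms k)))\<^sup>2"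
      by (simp add: power_mult_distrib)
    moreover have "d \<le> (norm (g - (1/2::real) *\<^sub>R (ms n + ms k)))\<^sup>2"
      using dle half ms(1) by blast
    ultimately have "4 * d \<le> (norm (a + b))\<^sup>2" by simp
    moreover have "a - b = ms k - ms n" by (simp add: a_def b_def)
    moreover note parallelogram[of a b]
    moreover have "(norm a)\<^sup>2 < d + inverse (real (Suc n))" "(norm b)\<^sup>2 < d + inverse (real (Suc k))"
      using ms(2) by (auto simp: a_def b_def)
    ultimately show ?thesis by simp
  qed
  have "Cauchy ms"
  proof (rule metric_CauchyI)
    fix e :: real assume e: "e > 0"
    obtain N where N: "4 / (e*e) < real N" using reals_Archimedean2 by blast
    have "4 / real (Suc N) < e * e"
      using N e by (simp add: field_simps) (smt (verit) mult_pos_pos)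
    have "dist (ms m) (ms n) < e" if "m \<ge> N" "n \<ge> N" for m n
    proof -
      have i1: "inverse (real (Suc m)) \<le> inverse (real (Suc N))"
        using that by (simp add: field_simps)
      have i2: "inverse (real (Suc n)) \<le> inverse (real (Suc N))"
        using that by (simp add: field_simps)
      have "(norm (ms m - ms n))\<^sup>2 \<le> 4 * inverse (real (Suc N))"
        using bound[of m n] i1 i2 by linarith
      also have "\<dots> < e\<^sup>2" using \<open>4 / real (Suc N) < e * e\<close> by (simp add: power2_eq_square divide_inverse)
      finally have "(norm (ms m - ms n))\<^sup>2 < e\<^sup>2" .
      then have "norm (ms m - ms n) < e" using e by (simp add: power_less_imp_less_base)
      then show ?thesis by (simp add: dist_norm)
    qed
    then show "\<exists>M. \<forall>m\<ge>M. \<forall>n\<ge>M. dist (ms m) (ms n) < e" by blast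
  qed
  then obtain p where lim: "ms \<longlonglongrightarrow> p" using Cauchy_convergent_iff convergent_def by blast
  have pM: "p \<in> M" using closed_sequentially[OF cl ms(1) lim] .
  have pmin: "(norm (g - p))\<^sup>2 \<le> (norm (g - m))\<^sup>2" if "m \<in> M" for m
  proof -
    have l1: "(\<lambda>n. (norm (g - ms n))\<^sup>2) \<longlonglongrightarrow> (norm (g - p))\<^sup>2"
      by (intro tendsto_intros lim)
    have l2: "(\<lambda>n. d + inverse (real (Suc n))) \<longlonglongrightarrow> d + 0"
      by (intro tendsto_intros LIMSEQ_inverse_real_of_nat)
    have "(norm (g - p))\<^sup>2 \<le> d + 0"
      by (rule LIMSEQ_le[OF l1 l2]) (use ms(2) less_imp_le in blast)
    then show ?thesis using dle[OF that] by linarith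
  qed
  have "\<forall>m\<in>M. cinner (g - p) m = 0"
  proof (intro ballI, rule ccontr)
    fix m assume mM: "m \<in> M" and c0: "cinner (g - p) m \<noteq> 0"
    define e where "e = g - p"
    define c where "c = cinner e m"
    define s where "s = 1 / ((norm m)\<^sup>2 + 1)"
    have s: "s > 0" by (simp add: s_def add_nonneg_pos)
    have sm: "s * (norm m)\<^sup>2 < 1"
    proof -
      have "0 < (norm m)\<^sup>2 + 1" by (simp add: add_nonneg_pos)
      then show ?thesis by (simp add: s_def divide_less_eq)
    qed
    define t where "t = complex_of_real s * c"
    have "p + t *\<^sub>C m \<in> M" using M pM mM by (simp add: csubspace_def)
    then have "(norm e)\<^sup>2 \<le> (norm (e + - (t *\<^sub>C m)))\<^sup>2"
      using pmin by (simp add: e_def algebra_simps)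
    also have "\<dots> = (norm e)\<^sup>2 + (norm (t *\<^sub>C m))\<^sup>2 + 2 * Re (cinner e (- (t *\<^sub>C m)))"
      using norm_add_sq[of e "- (t *\<^sub>C m)"] by simp
    also have "cinner e (- (t *\<^sub>C m)) = - complex_of_real (s * (cmod c)\<^sup>2)"
      by (simp add: cinner_minus_right cinner_scale_right t_def c_def mult.commute complex_norm_square[symmetric] del: of_real_power)
    also have "norm (t *\<^sub>C m) = s * cmod c * norm m"
      using s by (simp add: norm_cscale t_def norm_mult)
    finally have "0 \<le> (s * cmod c * norm m)\<^sup>2 - 2 * (s * (cmod c)\<^sup>2)" by simp
    then have "0 \<le> (s * (cmod c)\<^sup>2) * (s * (norm m)\<^sup>2 - 2)"
      by (simp add: algebra_simps power2_eq_square)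
    moreover have "s * (cmod c)\<^sup>2 > 0" using s c0 by (simp add: c_def e_def)
    ultimately have "0 \<le> s * (norm m)\<^sup>2 - 2" by (simp add: zero_le_mult_iff)
    then show False using sm by simp
  qed
  then show ?thesis using pM by blast
qed

lemma proj_props:
  assumes "csubspace M" "closed M"
  shows "proj M g \<in> M" "\<forall>m\<in>M. cinner (g - proj M g) m = 0"
  using proj_exists[OF assms, of g] proj_unique[OF assms(1)] by metis+

lemma proj_diff:
  assumes "csubspace M" "closed M"
  shows "proj M (g - g') = proj M g - proj M g'"
proof (rule proj_unique[OF assms(1)])
  show "proj M g - proj M g' \<in> M" using proj_props[OF assms] csubspace_diff[OF assms(1)] by blast
  show "\<forall>m\<in>M. cinner (g - g' - (proj M g - proj M g')) m = 0"
  proof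
    fix m assume "m \<in> M"
    have "g - g' - (proj M g - proj M g') = (g - proj M g) - (g' - proj M g')" by simp
    then show "cinner (g - g' - (proj M g - proj M g')) m = 0"
      using proj_props(2)[OF assms, of g] proj_props(2)[OF assms, of g'] \<open>m\<in>M\<close>
      by (simp add: cinner_diff_left)
  qed
qed


lemma lin_op_sub: "lin_op D S \<Longrightarrow> csubspace D"
  by (simp add: lin_op_def)

lemma lin_add: "lin_op D S \<Longrightarrow> x \<in> D \<Longrightarrow> y \<in> D \<Longrightarrow> S (x + y) = S x + S y"
  by (simp add: lin_op_def)

lemma lin_scale: "lin_op D S \<Longrightarrow> x \<in> D \<Longrightarrow> S (a *\<^sub>C x) = a *\<^sub>C S x"
  by (simp add: lin_op_def)

lemma lin_zero: "lin_op D S \<Longrightarrow> S 0 = 0"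
  using lin_scale[of D S 0 0] by (simp add: lin_op_def csubspace_def)

lemma lin_minus: "lin_op D S \<Longrightarrow> x \<in> D \<Longrightarrow> S (- x) = - S x"
  using lin_scale[of D S x "-1"] by (simp add: cscale_minus_left)

lemma lin_diff: "lin_op D S \<Longrightarrow> x \<in> D \<Longrightarrow> y \<in> D \<Longrightarrow> S (x - y) = S x - S y"
  using lin_add[of D S x "-y"] lin_minus[of D S y] csubspace_minus[OF lin_op_sub, of D S y]
  by simp

lemma csub_add: "csubspace D \<Longrightarrow> x \<in> D \<Longrightarrow> y \<in> D \<Longrightarrow> x + y \<in> D"
  by (simp add: csubspace_def)

lemma csub_scale: "csubspace D \<Longrightarrow> x \<in> D \<Longrightarrow> a *\<^sub>C x \<in> D"
  by (simp add: csubspace_def)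

lemma csub_zero: "csubspace D \<Longrightarrow> 0 \<in> D"
  by (simp add: csubspace_def)

lemma cs_lin: "closed_symmetric D S \<Longrightarrow> lin_op D S"
  by (simp add: closed_symmetric_def symmetric_op_def)

lemma cs_sym: "closed_symmetric D S \<Longrightarrow> x \<in> D \<Longrightarrow> y \<in> D \<Longrightarrow> cinner (S x) y = cinner x (S y)"
  by (simp add: closed_symmetric_def symmetric_op_def)

lemma cs_im:
  assumes cs: "closed_symmetric D S" and f: "f \<in> D"
  shows "Im (cinner (S f - l *\<^sub>C f) f) = - Im l * (norm f)\<^sup>2"
proof -
  have hc: "cnj (cinner (S f) f) = cinner (S f) f"
    using cs_sym[OF cs f f] cinner_commute[of f "S f"] by simp
  have "Im (cinner (S f) f) = 0" using arg_cong[OF hc, of Im] by simp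
  then show ?thesis by (simp add: cinner_diff_left cinner_scale_left cinner_norm del: of_real_power)
qed

lemma cs_inj:
  assumes cs: "closed_symmetric D S" and l: "Im l \<noteq> 0" and f: "f \<in> D"
    and h: "cinner (S f - l *\<^sub>C f) f = 0"
  shows "f = 0"
  using cs_im[OF cs f, of l] h l by simp

lemma cs_lower:
  assumes cs: "closed_symmetric D S" and f: "f \<in> D"
  shows "\<bar>Im l\<bar> * norm f \<le> norm (S f - l *\<^sub>C f)"
proof (cases "f = 0")
  case True then show ?thesis by simp
next
  case False
  have "\<bar>Im l\<bar> * (norm f)\<^sup>2 = \<bar>Im (cinner (S f - l *\<^sub>C f) f)\<bar>"
    using cs_im[OF cs f, of l] by (simp add: abs_mult)
  also have "\<dots> \<le> cmod (cinner (S f - l *\<^sub>C f) f)" by (rule abs_Im_le_cmod)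
  also have "\<dots> \<le> norm (S f - l *\<^sub>C f) * norm f" by (rule cauchy_schwarz)
  finally have "(\<bar>Im l\<bar> * norm f) * norm f \<le> norm (S f - l *\<^sub>C f) * norm f"
    by (simp add: power2_eq_square mult.assoc)
  then show ?thesis using False by simp
qed

lemma M_in: "h \<in> D \<Longrightarrow> S h - l *\<^sub>C h \<in> M_sp l D S"
  by (simp add: M_sp_def)

lemma M_sub:
  assumes L: "lin_op D S" shows "csubspace (M_sp l D S)"
proof -
  have D: "csubspace D" using assms lin_op_sub by blast
  have z: "0 \<in> M_sp l D S"
  proof -
    have e: "0 = S 0 - l *\<^sub>C 0" using lin_zero[OF L] by simp
    show ?thesis by (subst e) (rule M_in[OF csub_zero[OF D]])
  qed
  have a: "x + y \<in> M_sp l D S" if xy: "x \<in> M_sp l D S" "y \<in> M_sp l D S" for x y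
  proof -
    obtain a where a: "a \<in> D" "x = S a - l *\<^sub>C a" using xy(1) by (auto simp: M_sp_def)
    obtain b where b: "b \<in> D" "y = S b - l *\<^sub>C b" using xy(2) by (auto simp: M_sp_def)
    have e: "x + y = S (a + b) - l *\<^sub>C (a + b)"
      using lin_add[OF L a(1) b(1)] a(2) b(2) by (simp add: cscale_add_right)
    show ?thesis by (subst e) (rule M_in[OF csub_add[OF D a(1) b(1)]])
  qed
  have s: "c *\<^sub>C x \<in> M_sp l D S" if x: "x \<in> M_sp l D S" for x c
  proof -
    obtain a where a: "a \<in> D" "x = S a - l *\<^sub>C a" using x by (auto simp: M_sp_def)
    have e: "c *\<^sub>C x = S (c *\<^sub>C a) - l *\<^sub>C (c *\<^sub>C a)"
      using lin_scale[OF L a(1)] a(2) by (simp add: cscale_diff_right mult.commute)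
    show ?thesis by (subst e) (rule M_in[OF csub_scale[OF D a(1)]])
  qed
  show ?thesis unfolding csubspace_def using z a s by auto
qed

lemma M_closed:
  assumes cs: "closed_symmetric D S" and l: "Im l \<noteq> 0"
  shows "closed (M_sp l D S)"
  unfolding closed_sequential_limits
proof (intro allI impI)
  fix y q assume yq: "(\<forall>n. y n \<in> M_sp l D S) \<and> y \<longlonglongrightarrow> q"
  have L: "lin_op D S" using cs cs_lin by blast
  have D: "csubspace D" using L lin_op_sub by blast
  have "\<forall>n. \<exists>x. x \<in> D \<and> y n = S x - l *\<^sub>C x" using yq by (auto simp: M_sp_def)
  then obtain f where f: "\<And>n. f n \<in> D" "\<And>n. y n = S (f n) - l *\<^sub>C f n" by metis
  have cy: "Cauchy y" using yq convergent_Cauchy convergent_def by blast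
  have il: "\<bar>Im l\<bar> > 0" using l by simp
  have "Cauchy f"
  proof (rule metric_CauchyI)
    fix e :: real assume e: "e > 0"
    have eil: "e * \<bar>Im l\<bar> > 0" using e il by simp
    obtain N where N: "\<forall>m\<ge>N. \<forall>n\<ge>N. dist (y m) (y n) < e * \<bar>Im l\<bar>"
      using cy eil unfolding Cauchy_def by blast
    have "dist (f m) (f n) < e" if "m \<ge> N" "n \<ge> N" for m n
    proof -
      have eq: "S (f m - f n) - l *\<^sub>C (f m - f n) = y m - y n"
        using f(2)[of m] f(2)[of n] lin_diff[OF L f(1)[of m] f(1)[of n]] by (simp add: cscale_diff_right)
      have "\<bar>Im l\<bar> * norm (f m - f n) \<le> norm (S (f m - f n) - l *\<^sub>C (f m - f n))"
        by (rule cs_lower[OF cs csubspace_diff[OF D f(1)[of m] f(1)[of n]]])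
      also have "\<dots> = norm (y m - y n)" by (simp only: eq)
      also have "\<dots> < \<bar>Im l\<bar> * e" using N that by (simp add: dist_norm mult.commute)
      finally have "\<bar>Im l\<bar> * norm (f m - f n) < \<bar>Im l\<bar> * e" .
      then have "norm (f m - f n) < e" using il mult_less_cancel_left_pos by blast
      then show ?thesis by (simp add: dist_norm)
    qed
    then show "\<exists>M. \<forall>m\<ge>M. \<forall>n\<ge>M. dist (f m) (f n) < e" by blast
  qed
  then obtain f0 where f0: "f \<longlonglongrightarrow> f0" using Cauchy_convergent_iff convergent_def by blast
  have Sf: "S (f n) = y n + l *\<^sub>C f n" for n using f(2)[of n] by simp
  have "(\<lambda>n. y n + l *\<^sub>C f n) \<longlonglongrightarrow> q + l *\<^sub>C f0"
    by (intro tendsto_add yq[THEN conjunct2] bounded_linear.tendsto[OF bl_cscale] f0)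
  then have "(\<lambda>n. (f n, S (f n))) \<longlonglongrightarrow> (f0, q + l *\<^sub>C f0)"
    using f0 by (simp add: Sf tendsto_Pair)
  moreover have "closed {(x, S x) | x. x \<in> D}" using cs by (simp add: closed_symmetric_def closed_op_def)
  moreover have "\<And>n. (f n, S (f n)) \<in> {(x, S x) | x. x \<in> D}" using f(1) by blast
  ultimately have "(f0, q + l *\<^sub>C f0) \<in> {(x, S x) | x. x \<in> D}"
    by (rule closed_sequentially[rotated 2])
  then have "f0 \<in> D" "S f0 = q + l *\<^sub>C f0" by auto
  then have "q = S f0 - l *\<^sub>C f0" by simp
  then show "q \<in> M_sp l D S" using M_in[OF \<open>f0 \<in> D\<close>] by simp
qed

lemma mem_N: "n \<in> N_sp l D S \<longleftrightarrow> (\<forall>h\<in>D. cinner (S h - l *\<^sub>C h) n = 0)"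
  by (simp add: N_sp_def orth_compl_def M_sp_def)

lemma N_sub: "csubspace (N_sp l D S)"
  by (simp add: N_sp_def csubspace_orth_compl)

lemma N_closed: "closed (N_sp l D S)"
  by (simp add: N_sp_def closed_orth_compl)

lemma M_orth_N: "m \<in> M_sp l D S \<Longrightarrow> n \<in> N_sp l D S \<Longrightarrow> cinner m n = 0"
  by (simp add: N_sp_def orth_compl_def)

lemma proj_N_eq:
  assumes "p \<in> N_sp l D S" "g - p \<in> M_sp l D S"
  shows "proj (N_sp l D S) g = p"
  using assms by (intro proj_unique[OF N_sub]) (auto simp: M_orth_N)

lemma orthN_sub_M:
  assumes cs: "closed_symmetric D S" and l: "Im l \<noteq> 0"
    and y: "\<forall>n\<in>N_sp l D S. cinner y n = 0"
  shows "y \<in> M_sp l D S"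
proof -
  have Ms: "csubspace (M_sp l D S)" using M_sub cs cs_lin by blast
  have Mc: "closed (M_sp l D S)" using M_closed[OF cs l] .
  define p where "p = proj (M_sp l D S) y"
  have p: "p \<in> M_sp l D S" "\<forall>m\<in>M_sp l D S. cinner (y - p) m = 0"
    using proj_props[OF Ms Mc] p_def by auto
  have yp: "y - p \<in> N_sp l D S"
    using p(2) cinner_sym0 unfolding N_sp_def orth_compl_def by blast
  have "cinner (y - p) (y - p) = cinner y (y - p) - cinner p (y - p)"
    by (simp add: cinner_diff_left)
  also have "\<dots> = 0" using y yp M_orth_N[OF p(1) yp] by simp
  finally show ?thesis using p(1) by simp
qed

lemma forbidden_wd:
  assumes cs: "closed_symmetric D S" and l: "Im l \<noteq> 0"
    and g: "g \<in> orth_compl (closure D)" and g': "g' \<in> orth_compl (closure D)"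
    and eq: "proj (N_sp l D S) g = proj (N_sp l D S) g'"
  shows "proj (N_sp (cnj l) D S) g = proj (N_sp (cnj l) D S) g'"
proof -
  have L: "lin_op D S" using cs cs_lin by blast
  have Dsub: "csubspace D" using L lin_op_sub by blast
  define d where "d = g - g'"
  have dD: "d \<in> orth_compl D" using g g' csubspace_diff[OF csubspace_orth_compl]
    by (simp add: d_def orth_compl_closure)
  have "proj (N_sp l D S) d = 0" unfolding d_def proj_diff[OF N_sub N_closed] eq by simp
  then have "\<forall>n\<in>N_sp l D S. cinner d n = 0" using proj_props(2)[OF N_sub[of l D S] N_closed[of l D S], where g=d] by simp
  then have "d \<in> M_sp l D S" using orthN_sub_M[OF cs l] by blast
  then obtain f where f: "f \<in> D" "d = S f - l *\<^sub>C f" by (auto simp: M_sp_def)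
  have fN: "f \<in> N_sp (cnj l) D S"
    unfolding mem_N
  proof
    fix h assume h: "h \<in> D"
    have "cinner h d = 0" using dD h by (simp add: orth_compl_def)
    then have "cinner d h = 0" using cinner_sym0 by blast
    then have "cinner f (S h - cnj l *\<^sub>C h) = 0"
      using cs_sym[OF cs f(1) h] by (simp add: f(2) cinner_simps)
    then show "cinner (S h - cnj l *\<^sub>C h) f = 0" using cinner_sym0 by blast
  qed
  have f0: "f = 0"
  proof (rule cs_inj[OF cs _ f(1)])
    show "Im (cnj l) \<noteq> 0" using l by simp
    show "cinner (S f - cnj l *\<^sub>C f) f = 0" using fN f(1) by (simp add: mem_N)
  qed
  have d0: "d = 0" using f f0 lin_zero[OF L] by simp
  have "proj (N_sp (cnj l) D S) d = 0"
    unfolding d0 by (rule proj_unique[OF N_sub csub_zero[OF N_sub]]) simp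
  then show ?thesis unfolding d_def proj_diff[OF N_sub N_closed] by simp
qed

lemma forbidden_char:
  assumes cs: "closed_symmetric D S" and l: "Im l \<noteq> 0"
    and g: "g \<in> orth_compl (closure D)"
  shows "forbidden_op l D S (proj (N_sp l D S) g) = proj (N_sp (cnj l) D S) g"
proof -
  let ?P = "\<lambda>y. \<exists>g' \<in> orth_compl (closure D).
                 proj (N_sp l D S) g = proj (N_sp l D S) g' \<and> y = proj (N_sp (cnj l) D S) g'"
  have "?P (proj (N_sp (cnj l) D S) g)" using g by blast
  then have "?P (SOME y. ?P y)" by (rule someI)
  then obtain g' where "g' \<in> orth_compl (closure D)" "proj (N_sp l D S) g = proj (N_sp l D S) g'"
    "(SOME y. ?P y) = proj (N_sp (cnj l) D S) g'" by blast
  then show ?thesis using forbidden_wd[OF cs l g] unfolding forbidden_op_def by metis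
qed

lemma forbidden_dom_I: "g \<in> orth_compl (closure D) \<Longrightarrow> proj (N_sp l D S) g \<in> forbidden_dom l D S"
  by (simp add: forbidden_dom_def)

section \<open>Inverse operator\<close>

lemma inv_op_app: "inj_on S D \<Longrightarrow> f \<in> D \<Longrightarrow> inv_op D S (S f) = f"
  unfolding inv_op_def by (rule the_equality) (auto dest: inj_onD)

lemma cs_inv:
  assumes cs: "closed_symmetric D S" and inj: "inj_on S D"
  shows "closed_symmetric (S ` D) (inv_op D S)"
proof -
  have L: "lin_op D S" using cs cs_lin by blast
  have D: "csubspace D" using L lin_op_sub by blast
  have z: "0 \<in> S ` D"
  proof -
    have "0 = S 0" using lin_zero[OF L] by simp
    then show ?thesis using csub_zero[OF D] by blast
  qed
  have a: "x + y \<in> S ` D \<and> inv_op D S (x + y) = inv_op D S x + inv_op D S y"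
    if xy: "x \<in> S ` D" "y \<in> S ` D" for x y
  proof -
    obtain a where a: "a \<in> D" "x = S a" using xy(1) by blast
    obtain b where b: "b \<in> D" "y = S b" using xy(2) by blast
    have e: "x + y = S (a + b)" using lin_add[OF L a(1) b(1)] a b by simp
    have ab: "a + b \<in> D" using csub_add[OF D a(1) b(1)] .
    show ?thesis unfolding e using ab inv_op_app[OF inj] a b by simp
  qed
  have s: "c *\<^sub>C x \<in> S ` D \<and> inv_op D S (c *\<^sub>C x) = c *\<^sub>C inv_op D S x"
    if x: "x \<in> S ` D" for x c
  proof -
    obtain a where a: "a \<in> D" "x = S a" using x by blast
    have e: "c *\<^sub>C x = S (c *\<^sub>C a)" using lin_scale[OF L a(1)] a by simp
    have ab: "c *\<^sub>C a \<in> D" using csub_scale[OF D a(1)] .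
    show ?thesis unfolding e using ab inv_op_app[OF inj] a by simp
  qed
  have lin: "lin_op (S ` D) (inv_op D S)"
    unfolding lin_op_def csubspace_def using z a s by blast
  have sym: "\<forall>x\<in>S ` D. \<forall>y\<in>S ` D. cinner (inv_op D S x) y = cinner x (inv_op D S y)"
    using cs_sym[OF cs] inv_op_app[OF inj] by auto
  have G1: "{(x, inv_op D S x) | x. x \<in> S ` D} = (\<lambda>a. (S a, a)) ` D"
    using inv_op_app[OF inj] by auto
  have G2: "{(x, S x) | x. x \<in> D} = (\<lambda>a. (a, S a)) ` D" by auto
  have G3: "(\<lambda>a. (S a, a)) ` D = (\<lambda>p. (snd p, fst p)) -` ((\<lambda>a. (a, S a)) ` D)" by auto
  have G: "{(x, inv_op D S x) | x. x \<in> S ` D} = (\<lambda>p. (snd p, fst p)) -` {(x, S x) | x. x \<in> D}"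
    unfolding G1 G2 G3 ..
  have C: "closed {(x, S x) | x. x \<in> D}" using cs by (simp add: closed_symmetric_def closed_op_def)
  have "continuous (at p) (\<lambda>p. (snd p, fst p))" for p :: "'a \<times> 'a"
    by (intro continuous_intros)
  then have "closed {(x, inv_op D S x) | x. x \<in> S ` D}"
    unfolding G by (rule continuous_closed_vimage[OF C])
  then show ?thesis using lin sym by (simp add: closed_symmetric_def symmetric_op_def closed_op_def)
qed

lemma M_inv:
  assumes cs: "closed_symmetric D S" and inj: "inj_on S D" and l: "l \<noteq> 0"
  shows "M_sp (1 / l) (S ` D) (inv_op D S) = M_sp l D S"
proof -
  have L: "lin_op D S" using cs cs_lin by blast
  have D: "csubspace D" using L lin_op_sub by blast
  have key: "inv_op D S (S f) - (1 / l) *\<^sub>C S f = S ((- 1 / l) *\<^sub>C f) - l *\<^sub>C ((- 1 / l) *\<^sub>C f)"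
    if f: "f \<in> D" for f
  proof -
    have "S ((- 1 / l) *\<^sub>C f) = (- 1 / l) *\<^sub>C S f" using lin_scale[OF L f] .
    moreover have "l * (- 1 / l) = - 1" using l by simp
    ultimately show ?thesis using inv_op_app[OF inj f] l by (simp add: cscale_minus_left cscale_minus_right)
  qed
  show ?thesis
  proof
    show "M_sp (1 / l) (S ` D) (inv_op D S) \<subseteq> M_sp l D S"
    proof
      fix m assume "m \<in> M_sp (1 / l) (S ` D) (inv_op D S)"
      then obtain f where f: "f \<in> D" "m = inv_op D S (S f) - (1 / l) *\<^sub>C S f"
        by (auto simp: M_sp_def)
      show "m \<in> M_sp l D S" unfolding f(2) key[OF f(1)] by (rule M_in[OF csub_scale[OF D f(1)]])
    qed
    show "M_sp l D S \<subseteq> M_sp (1 / l) (S ` D) (inv_op D S)"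
    proof
      fix m assume "m \<in> M_sp l D S"
      then obtain f where f: "f \<in> D" "m = S f - l *\<^sub>C f" by (auto simp: M_sp_def)
      have fl: "(- l) *\<^sub>C f \<in> D" using csub_scale[OF D f(1)] .
      have "(- 1 / l) *\<^sub>C (- l) *\<^sub>C f = f" using l by simp
      then have "m = inv_op D S (S ((- l) *\<^sub>C f)) - (1 / l) *\<^sub>C S ((- l) *\<^sub>C f)"
        using key[OF fl] f(2) by simp
      moreover have "S ((- l) *\<^sub>C f) \<in> S ` D" using fl by blast
      ultimately show "m \<in> M_sp (1 / l) (S ` D) (inv_op D S)"
        unfolding M_sp_def by blast
    qed
  qed
qed

lemma N_inv:
  assumes cs: "closed_symmetric D S" and inj: "inj_on S D" and l: "l \<noteq> 0"
  shows "N_sp (1 / l) (S ` D) (inv_op D S) = N_sp l D S"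
  by (simp add: N_sp_def M_inv[OF assms])


definition V4 :: "'a::chilbert \<Rightarrow> 'a \<Rightarrow> 'a \<Rightarrow> 'a \<Rightarrow> complex \<Rightarrow> complex \<Rightarrow> complex \<Rightarrow> complex \<Rightarrow> 'a" where
  "V4 p q r s a b c d = a *\<^sub>C p + b *\<^sub>C q + c *\<^sub>C r + d *\<^sub>C s"

lemma V4_add: "V4 p q r s a b c d + V4 p q r s a' b' c' d' = V4 p q r s (a+a') (b+b') (c+c') (d+d')"
  by (simp add: V4_def cscale_add_left algebra_simps)

lemma V4_diff: "V4 p q r s a b c d - V4 p q r s a' b' c' d' = V4 p q r s (a-a') (b-b') (c-c') (d-d')"
  by (simp add: V4_def cscale_diff_left algebra_simps)

lemma V4_minus: "- V4 p q r s a b c d = V4 p q r s (-a) (-b) (-c) (-d)"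
  by (simp add: V4_def cscale_minus_left algebra_simps)

lemma V4_scale: "k *\<^sub>C V4 p q r s a b c d = V4 p q r s (k*a) (k*b) (k*c) (k*d)"
  by (simp add: V4_def cscale_add_right)

lemma V4_cong: "a = a' \<Longrightarrow> b = b' \<Longrightarrow> c = c' \<Longrightarrow> d = d' \<Longrightarrow> V4 p q r s a b c d = V4 p q r s a' b' c' d'"
  by simp

lemmas V4_rules = V4_add V4_diff V4_minus V4_scale

lemma alg5:
  fixes f t p af :: "'a::chilbert"
  assumes af: "af = w *\<^sub>C p - z *\<^sub>C t" and z: "z \<noteq> 0"
  shows "f + t - p - ((w - z) / z) *\<^sub>C p = (- 1 / z) *\<^sub>C af - z *\<^sub>C ((- 1 / z) *\<^sub>C f)"
proof -
  obtain P TT F where PTF: "P = p" "TT = t" "F = f" by blast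
  have r: "p = V4 P TT F P 1 0 0 0" "t = V4 P TT F P 0 1 0 0" "f = V4 P TT F P 0 0 1 0"
    using PTF by (simp_all add: V4_def)
  show ?thesis unfolding af r V4_rules
    by (rule V4_cong) (use z in \<open>simp_all add: field_simps\<close>)
qed

lemma alg6:
  fixes f t p af :: "'a::chilbert"
  assumes af: "af = w *\<^sub>C p - z *\<^sub>C t" and w: "w \<noteq> 0"
  shows "f + t - p - ((w - z) / w) *\<^sub>C t = (- 1 / w) *\<^sub>C af - w *\<^sub>C ((- 1 / w) *\<^sub>C f)"
proof -
  obtain P TT F where PTF: "P = p" "TT = t" "F = f" by blast
  have r: "p = V4 P TT F P 1 0 0 0" "t = V4 P TT F P 0 1 0 0" "f = V4 P TT F P 0 0 1 0"
    using PTF by (simp_all add: V4_def)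
  show ?thesis unfolding af r V4_rules
    by (rule V4_cong) (use w in \<open>simp_all add: field_simps\<close>)
qed

lemma alg7:
  fixes g ph f1 tph af1 :: "'a::chilbert"
  assumes af: "af1 = g - ph + z *\<^sub>C f1" and k: "k * (w - z) = z"
  shows "(- z) *\<^sub>C af1 + z *\<^sub>C (k *\<^sub>C tph) - w *\<^sub>C (k *\<^sub>C ph)
       = - z *\<^sub>C (g - ((- z) *\<^sub>C f1 + k *\<^sub>C tph - k *\<^sub>C ph))"
proof -
  obtain G P F TT where PTF: "G = g" "P = ph" "F = f1" "TT = tph" by blast
  have r: "g = V4 G P F TT 1 0 0 0" "ph = V4 G P F TT 0 1 0 0" "f1 = V4 G P F TT 0 0 1 0"
     "tph = V4 G P F TT 0 0 0 1"
    using PTF by (simp_all add: V4_def)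
  show ?thesis unfolding af r V4_rules
    by (rule V4_cong) (use k in \<open>simp_all add: algebra_simps\<close>)
qed

lemma alg8:
  fixes g ph f2 tph af2 :: "'a::chilbert"
  assumes af: "af2 = g - (z / w) *\<^sub>C tph + w *\<^sub>C f2" and k: "k * (w - z) = z" and w: "w \<noteq> 0"
  shows "(- w) *\<^sub>C af2 + z *\<^sub>C (k *\<^sub>C tph) - w *\<^sub>C (k *\<^sub>C ph)
       = - w *\<^sub>C (g - ((- w) *\<^sub>C f2 + k *\<^sub>C tph - k *\<^sub>C ph))"
proof -
  obtain G P F TT where PTF: "G = g" "P = ph" "F = f2" "TT = tph" by blast
  have r: "g = V4 G P F TT 1 0 0 0" "ph = V4 G P F TT 0 1 0 0" "f2 = V4 G P F TT 0 0 1 0"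
     "tph = V4 G P F TT 0 0 0 1"
    using PTF by (simp_all add: V4_def)
  show ?thesis unfolding af r V4_rules
    by (rule V4_cong) (use k w in \<open>simp_all add: algebra_simps\<close>)
qed

lemma alg9:
  fixes af af' t p g f f' :: "'a::chilbert"
  assumes "af + z *\<^sub>C t - w *\<^sub>C p = - z *\<^sub>C (g - (f + t - p))"
    and "af' + z *\<^sub>C t - w *\<^sub>C p = - w *\<^sub>C (g - (f' + t - p))"
  shows "af' - af - z *\<^sub>C (f' - f) = (z - w) *\<^sub>C (g - (f' + t - p))"
proof -
  have a1: "af = - z *\<^sub>C (g - (f + t - p)) - z *\<^sub>C t + w *\<^sub>C p" using assms(1) by (simp add: algebra_simps)
  have a2: "af' = - w *\<^sub>C (g - (f' + t - p)) - z *\<^sub>C t + w *\<^sub>C p" using assms(2) by (simp add: algebra_simps)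
  show ?thesis unfolding a1 a2
    by (simp add: cscale_diff_right cscale_add_right cscale_diff_left cscale_minus_left cscale_minus_right algebra_simps)
qed

lemma alg1:
  fixes a f p q :: "'a::chilbert"
  assumes "f = p - q" "w = z - c"
  shows "a - z *\<^sub>C f + c *\<^sub>C p - c *\<^sub>C q = a - w *\<^sub>C f"
  unfolding assms cscale_diff_right cscale_diff_left by (simp add: algebra_simps)


lemma N_prop: "\<psi> \<in> N_sp l D S \<Longrightarrow> h \<in> D \<Longrightarrow> cinner \<psi> (S h) = cnj l * cinner \<psi> h"
proof -
  assume "\<psi> \<in> N_sp l D S" "h \<in> D"
  then have "cinner (S h - l *\<^sub>C h) \<psi> = 0" by (simp add: mem_N)
  then have "cinner \<psi> (S h - l *\<^sub>C h) = 0" using cinner_sym0 by blast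
  then show ?thesis by (simp add: cinner_diff_right cinner_scale_right)
qed

lemma proj_zero: "csubspace M \<Longrightarrow> proj M 0 = 0"
  by (rule proj_unique) (auto simp: csub_zero)

context
  fixes DA DT :: "'h::chilbert set" and A T :: "'h \<Rightarrow> 'h" and z :: complex
  assumes cs: "closed_symmetric DA A" and injA: "inj_on A DA" and imz: "Im z \<noteq> 0"
    and linT: "lin_op DT T" and DTN: "DT \<subseteq> N_sp z DA A" and TN: "T ` DT \<subseteq> N_sp (cnj z) DA A"
    and admT: "admissible z DA A DT T"
begin

lemma zf: "z \<noteq> 0" "cnj z \<noteq> 0" "cnj z - z \<noteq> 0" "z - cnj z \<noteq> 0" "Im (cnj z) \<noteq> 0"
  using imz by (auto simp: complex_eq_iff)

lemma LA: "lin_op DA A" using cs cs_lin by blast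
lemma DAs: "csubspace DA" using LA lin_op_sub by blast
lemma DTs: "csubspace DT" using linT lin_op_sub by blast

lemma direct:
  assumes f: "f \<in> DA" and p: "\<psi> \<in> DT" and e: "f + T \<psi> - \<psi> = 0"
  shows "\<psi> = 0"
proof -
  let ?w = "cnj z"
  define c0 where "c0 = z - ?w"
  have fe: "f = \<psi> - T \<psi>" using e by (simp add: algebra_simps)
  have pN: "\<psi> \<in> N_sp z DA A" using DTN p by blast
  have tN: "T \<psi> \<in> N_sp ?w DA A" using TN p by blast
  define g where "g = (A f - z *\<^sub>C f) + c0 *\<^sub>C \<psi>"
  have go0: "\<forall>h\<in>DA. cinner h g = 0"
  proof
    fix h assume h: "h \<in> DA"
    have e1: "cinner \<psi> (A h) = ?w * cinner \<psi> h" using N_prop[OF pN h] .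
    have e2: "cinner (T \<psi>) (A h) = z * cinner (T \<psi>) h" using N_prop[OF tN h] by simp
    have s1: "cinner g h = cinner f (A h) - z * cinner f h + c0 * cinner \<psi> h"
      by (simp add: g_def cinner_simps cs_sym[OF cs f h])
    have s2: "cinner f (A h) = ?w * cinner \<psi> h - z * cinner (T \<psi>) h"
      by (simp add: fe cinner_simps e1 e2)
    have s3: "cinner f h = cinner \<psi> h - cinner (T \<psi>) h"
      by (simp add: fe cinner_simps)
    have "cinner g h = 0" unfolding s1 s2 s3 c0_def by (simp add: algebra_simps)
    then show "cinner h g = 0" using cinner_sym0 by blast
  qed
  have go: "g \<in> orth_compl (closure DA)"
    using go0 by (simp add: orth_compl_closure) (simp add: orth_compl_def)
  have pz: "proj (N_sp z DA A) g = c0 *\<^sub>C \<psi>"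
  proof (rule proj_N_eq)
    show "c0 *\<^sub>C \<psi> \<in> N_sp z DA A" using csub_scale[OF N_sub pN] .
    have "g - c0 *\<^sub>C \<psi> = A f - z *\<^sub>C f" by (simp add: g_def)
    then show "g - c0 *\<^sub>C \<psi> \<in> M_sp z DA A" using M_in[OF f] by simp
  qed
  have pw: "proj (N_sp ?w DA A) g = c0 *\<^sub>C T \<psi>"
  proof (rule proj_N_eq)
    show "c0 *\<^sub>C T \<psi> \<in> N_sp ?w DA A" using csub_scale[OF N_sub tN] .
    have "g - c0 *\<^sub>C T \<psi> = A f - ?w *\<^sub>C f"
      unfolding g_def by (rule alg1[OF fe]) (simp add: c0_def)
    then show "g - c0 *\<^sub>C T \<psi> \<in> M_sp ?w DA A" using M_in[OF f] by simp
  qed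
  define \<phi> where "\<phi> = c0 *\<^sub>C \<psi>"
  have phD: "\<phi> \<in> DT" using csub_scale[OF DTs p] by (simp add: \<phi>_def)
  have Tph: "T \<phi> = c0 *\<^sub>C T \<psi>" using lin_scale[OF linT p] by (simp add: \<phi>_def)
  have fo: "forbidden_op z DA A \<phi> = T \<phi>"
    using forbidden_char[OF cs imz go] pz pw Tph by (simp add: \<phi>_def)
  have fd: "\<phi> \<in> forbidden_dom z DA A"
    using forbidden_dom_I[OF go, of z A] pz by (simp add: \<phi>_def)
  have "\<phi> = 0" using admT phD fo fd unfolding admissible_def by metis
  then show ?thesis using zf by (simp add: \<phi>_def c0_def)
qed

lemma ext_val:
  assumes f: "f \<in> DA" and p: "\<psi> \<in> DT"
  shows "ext_op z DA A DT T (f + T \<psi> - \<psi>) = A f + z *\<^sub>C T \<psi> - cnj z *\<^sub>C \<psi>"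
proof -
  let ?P = "\<lambda>y. \<exists>f'\<in>DA. \<exists>\<psi>'\<in>DT. f + T \<psi> - \<psi> = f' + T \<psi>' - \<psi>' \<and>
              y = A f' + z *\<^sub>C T \<psi>' - cnj z *\<^sub>C \<psi>'"
  have "?P (A f + z *\<^sub>C T \<psi> - cnj z *\<^sub>C \<psi>)" using f p by blast
  then have "?P (SOME y. ?P y)" by (rule someI)
  then obtain f' \<psi>' where f': "f' \<in> DA" "\<psi>' \<in> DT" "f + T \<psi> - \<psi> = f' + T \<psi>' - \<psi>'"
    and y: "(SOME y. ?P y) = A f' + z *\<^sub>C T \<psi>' - cnj z *\<^sub>C \<psi>'" by blast
  have "(f - f') + T (\<psi> - \<psi>') - (\<psi> - \<psi>') = 0"
    unfolding lin_diff[OF linT p f'(2)] using f'(3) by (simp add: algebra_simps)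
  then have "\<psi> - \<psi>' = 0"
    using direct csubspace_diff[OF DAs f f'(1)] csubspace_diff[OF DTs p f'(2)] by blast
  then have pp: "\<psi> = \<psi>'" by simp
  then have "f = f'" using f'(3) by simp
  then show ?thesis using y pp unfolding ext_op_def by simp
qed

lemma orth_RA:
  assumes f: "f \<in> DA" and p: "\<psi> \<in> DT" and h: "h \<in> DA"
  shows "cinner (f + T \<psi> - \<psi>) (A h) = cinner (A f + z *\<^sub>C T \<psi> - cnj z *\<^sub>C \<psi>) h"
proof -
  have pN: "\<psi> \<in> N_sp z DA A" using DTN p by blast
  have tN: "T \<psi> \<in> N_sp (cnj z) DA A" using TN p by blast
  have e1: "cinner \<psi> (A h) = cnj z * cinner \<psi> h" using N_prop[OF pN h] .
  have e2: "cinner (T \<psi>) (A h) = z * cinner (T \<psi>) h" using N_prop[OF tN h] by simp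
  show ?thesis by (simp add: cinner_simps e1 e2 cs_sym[OF cs f h])
qed

lemma im1z: "Im (1 / z) \<noteq> 0"
  using imz by (simp add: Im_divide sum_power2_eq_zero_iff)

lemma csinv: "closed_symmetric (A ` DA) (inv_op DA A)"
  using cs_inv[OF cs injA] .

lemma N1: "N_sp (1 / z) (A ` DA) (inv_op DA A) = N_sp z DA A"
  using N_inv[OF cs injA zf(1)] .

lemma N2: "N_sp (cnj (1 / z)) (A ` DA) (inv_op DA A) = N_sp (cnj z) DA A"
  using N_inv[OF cs injA zf(2)] by simp


lemma dir1:
  assumes adm: "admissible (1 / z) (A ` DA) (inv_op DA A) DT (\<lambda>\<psi>. (z / cnj z) *\<^sub>C T \<psi>)"
  shows "inj_on (ext_op z DA A DT T) (ext_dom DA DT T)"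
proof (rule inj_onI)
  let ?w = "cnj z"
  fix x1 x2 assume x1: "x1 \<in> ext_dom DA DT T" and x2: "x2 \<in> ext_dom DA DT T"
    and eq: "ext_op z DA A DT T x1 = ext_op z DA A DT T x2"
  obtain f1 \<psi>1 where a1: "f1 \<in> DA" "\<psi>1 \<in> DT" "x1 = f1 + T \<psi>1 - \<psi>1"
    using x1 unfolding ext_dom_def by blast
  obtain f2 \<psi>2 where a2: "f2 \<in> DA" "\<psi>2 \<in> DT" "x2 = f2 + T \<psi>2 - \<psi>2"
    using x2 unfolding ext_dom_def by blast
  have eqB: "A f1 + z *\<^sub>C T \<psi>1 - ?w *\<^sub>C \<psi>1 = A f2 + z *\<^sub>C T \<psi>2 - ?w *\<^sub>C \<psi>2"
    using eq ext_val[OF a1(1,2)] ext_val[OF a2(1,2)] a1(3) a2(3) by simp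
  define f where "f = f1 - f2"
  define \<psi> where "\<psi> = \<psi>1 - \<psi>2"
  have fD: "f \<in> DA" using csubspace_diff[OF DAs a1(1) a2(1)] by (simp add: f_def)
  have pD: "\<psi> \<in> DT" using csubspace_diff[OF DTs a1(2) a2(2)] by (simp add: \<psi>_def)
  have Af: "A f = A f1 - A f2" using lin_diff[OF LA a1(1) a2(1)] by (simp add: f_def)
  have Tp: "T \<psi> = T \<psi>1 - T \<psi>2" using lin_diff[OF linT a1(2) a2(2)] by (simp add: \<psi>_def)
  have "A f + z *\<^sub>C T \<psi> - ?w *\<^sub>C \<psi>
      = (A f1 + z *\<^sub>C T \<psi>1 - ?w *\<^sub>C \<psi>1) - (A f2 + z *\<^sub>C T \<psi>2 - ?w *\<^sub>C \<psi>2)"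
    unfolding Af Tp by (simp add: \<psi>_def cscale_diff_right algebra_simps)
  then have hB: "A f + z *\<^sub>C T \<psi> - ?w *\<^sub>C \<psi> = 0" using eqB by simp
  have x12: "x1 - x2 = f + T \<psi> - \<psi>" unfolding a1(3) a2(3) Tp by (simp add: f_def \<psi>_def algebra_simps)
  define x where "x = f + T \<psi> - \<psi>"
  have pN: "\<psi> \<in> N_sp z DA A" using DTN pD by blast
  have tN: "T \<psi> \<in> N_sp ?w DA A" using TN pD by blast
  have "\<psi> = 0"
  proof -
    have xo0: "\<forall>y\<in>A ` DA. cinner y x = 0"
    proof
      fix y assume "y \<in> A ` DA"
      then obtain h where h: "h \<in> DA" "y = A h" by blast
      have "cinner x (A h) = 0" unfolding x_def orth_RA[OF fD pD h(1)] hB by simp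
      then show "cinner y x = 0" using h(2) cinner_sym0 by blast
    qed
    have xo: "x \<in> orth_compl (closure (A ` DA))"
      using xo0 by (simp add: orth_compl_closure) (simp add: orth_compl_def)
    define c where "c = (?w - z) / z"
    have afe: "A f = ?w *\<^sub>C \<psi> - z *\<^sub>C T \<psi>" using hB by (simp add: algebra_simps)
    have pz: "proj (N_sp z DA A) x = c *\<^sub>C \<psi>"
    proof (rule proj_N_eq)
      show "c *\<^sub>C \<psi> \<in> N_sp z DA A" using csub_scale[OF N_sub pN] .
      have "x - c *\<^sub>C \<psi> = (- 1 / z) *\<^sub>C A f - z *\<^sub>C ((- 1 / z) *\<^sub>C f)"
        unfolding x_def c_def by (rule alg5[OF afe zf(1)])
      also have "\<dots> = A ((- 1 / z) *\<^sub>C f) - z *\<^sub>C ((- 1 / z) *\<^sub>C f)"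
        using lin_scale[OF LA fD] by simp
      finally have e: "x - c *\<^sub>C \<psi> = A ((- 1 / z) *\<^sub>C f) - z *\<^sub>C ((- 1 / z) *\<^sub>C f)" .
      show "x - c *\<^sub>C \<psi> \<in> M_sp z DA A" unfolding e by (rule M_in[OF csub_scale[OF DAs fD]])
    qed
    have pw: "proj (N_sp ?w DA A) x = ((?w - z) / ?w) *\<^sub>C T \<psi>"
    proof (rule proj_N_eq)
      show "((?w - z) / ?w) *\<^sub>C T \<psi> \<in> N_sp ?w DA A" using csub_scale[OF N_sub tN] .
      have "x - ((?w - z) / ?w) *\<^sub>C T \<psi> = (- 1 / ?w) *\<^sub>C A f - ?w *\<^sub>C ((- 1 / ?w) *\<^sub>C f)"
        unfolding x_def by (rule alg6[OF afe zf(2)])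
      also have "\<dots> = A ((- 1 / ?w) *\<^sub>C f) - ?w *\<^sub>C ((- 1 / ?w) *\<^sub>C f)"
        using lin_scale[OF LA fD] by simp
      finally have e: "x - ((?w - z) / ?w) *\<^sub>C T \<psi> = A ((- 1 / ?w) *\<^sub>C f) - ?w *\<^sub>C ((- 1 / ?w) *\<^sub>C f)" .
      show "x - ((?w - z) / ?w) *\<^sub>C T \<psi> \<in> M_sp ?w DA A"
        unfolding e by (rule M_in[OF csub_scale[OF DAs fD]])
    qed
    define \<phi> where "\<phi> = c *\<^sub>C \<psi>"
    have phD: "\<phi> \<in> DT" using csub_scale[OF DTs pD] by (simp add: \<phi>_def)
    have sc: "(z / ?w) * c = (?w - z) / ?w" using zf by (simp add: c_def field_simps)
    have Tph: "(z / ?w) *\<^sub>C T \<phi> = ((?w - z) / ?w) *\<^sub>C T \<psi>"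
      unfolding \<phi>_def lin_scale[OF linT pD] cscale_cscale sc ..
    have fo: "forbidden_op (1 / z) (A ` DA) (inv_op DA A) \<phi> = (z / ?w) *\<^sub>C T \<phi>"
      using forbidden_char[OF csinv im1z xo] pz pw Tph unfolding N1 N2 by (simp add: \<phi>_def)
    have fd: "\<phi> \<in> forbidden_dom (1 / z) (A ` DA) (inv_op DA A)"
      using forbidden_dom_I[OF xo, of "1 / z" "inv_op DA A"] pz unfolding N1 by (simp add: \<phi>_def)
    have "\<phi> = 0" using adm phD fo fd unfolding admissible_def by metis
    moreover have "c \<noteq> 0" using zf by (simp add: c_def)
    ultimately show ?thesis by (simp add: \<phi>_def)
  qed
  then have "A f = A 0" using hB lin_zero[OF LA] by (simp add: lin_zero[OF linT])
  then have "f = 0" using injA fD csub_zero[OF DAs] by (meson inj_onD)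
  then show "x1 = x2" using x12 \<open>\<psi> = 0\<close> lin_zero[OF linT] by simp
qed


lemma dir2:
  assumes inj: "inj_on (ext_op z DA A DT T) (ext_dom DA DT T)"
  shows "admissible (1 / z) (A ` DA) (inv_op DA A) DT (\<lambda>\<psi>. (z / cnj z) *\<^sub>C T \<psi>)"
proof -
  let ?w = "cnj z"
  have lin: "lin_op DT (\<lambda>\<psi>. (z / ?w) *\<^sub>C T \<psi>)"
    unfolding lin_op_def
  proof (intro conjI ballI allI DTs)
    fix x y assume "x \<in> DT" "y \<in> DT"
    then show "(z / ?w) *\<^sub>C T (x + y) = (z / ?w) *\<^sub>C T x + (z / ?w) *\<^sub>C T y"
      using lin_add[OF linT] by (simp add: cscale_add_right)
  next
    fix a x assume "x \<in> DT"
    then show "(z / ?w) *\<^sub>C T (a *\<^sub>C x) = a *\<^sub>C (z / ?w) *\<^sub>C T x"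
      using lin_scale[OF linT] by (simp add: mult.commute)
  qed
  have sub1: "DT \<subseteq> N_sp (1 / z) (A ` DA) (inv_op DA A)" unfolding N1 using DTN .
  have sub2: "(\<lambda>\<psi>. (z / ?w) *\<^sub>C T \<psi>) ` DT \<subseteq> N_sp (cnj (1 / z)) (A ` DA) (inv_op DA A)"
    unfolding N2 using TN csub_scale[OF N_sub] by blast
  have no: "\<not> (\<exists>\<phi>. \<phi> \<noteq> 0 \<and> \<phi> \<in> DT \<and> \<phi> \<in> forbidden_dom (1 / z) (A ` DA) (inv_op DA A) \<and>
              (z / ?w) *\<^sub>C T \<phi> = forbidden_op (1 / z) (A ` DA) (inv_op DA A) \<phi>)"
  proof
    assume "\<exists>\<phi>. \<phi> \<noteq> 0 \<and> \<phi> \<in> DT \<and> \<phi> \<in> forbidden_dom (1 / z) (A ` DA) (inv_op DA A) \<and>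
              (z / ?w) *\<^sub>C T \<phi> = forbidden_op (1 / z) (A ` DA) (inv_op DA A) \<phi>"
    then obtain \<phi> where ph0: "\<phi> \<noteq> 0" and phD: "\<phi> \<in> DT"
      and phF: "\<phi> \<in> forbidden_dom (1 / z) (A ` DA) (inv_op DA A)"
      and phE: "(z / ?w) *\<^sub>C T \<phi> = forbidden_op (1 / z) (A ` DA) (inv_op DA A) \<phi>" by blast
    obtain g where go: "g \<in> orth_compl (closure (A ` DA))"
      and phg: "\<phi> = proj (N_sp (1 / z) (A ` DA) (inv_op DA A)) g"
      using phF unfolding forbidden_dom_def by blast
    have pz: "proj (N_sp z DA A) g = \<phi>" using phg unfolding N1 by simp
    have pw: "proj (N_sp ?w DA A) g = (z / ?w) *\<^sub>C T \<phi>"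
      using forbidden_char[OF csinv im1z go] phg phE unfolding N1 N2 by simp
    have "\<forall>n\<in>N_sp z DA A. cinner (g - \<phi>) n = 0"
      using proj_props(2)[OF N_sub[of z DA A] N_closed[of z DA A], where g=g] pz by simp
    then have "g - \<phi> \<in> M_sp z DA A" using orthN_sub_M[OF cs imz] by blast
    then obtain f1 where f1: "f1 \<in> DA" "g - \<phi> = A f1 - z *\<^sub>C f1" by (auto simp: M_sp_def)
    have "\<forall>n\<in>N_sp ?w DA A. cinner (g - (z / ?w) *\<^sub>C T \<phi>) n = 0"
      using proj_props(2)[OF N_sub[of ?w DA A] N_closed[of ?w DA A], where g=g] pw by simp
    then have "g - (z / ?w) *\<^sub>C T \<phi> \<in> M_sp ?w DA A" using orthN_sub_M[OF cs zf(5)] by blast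
    then obtain f2 where f2: "f2 \<in> DA" "g - (z / ?w) *\<^sub>C T \<phi> = A f2 - ?w *\<^sub>C f2"
      by (auto simp: M_sp_def)
    have gA: "cinner g (A h) = 0" if h: "h \<in> DA" for h
    proof -
      have "g \<in> orth_compl (A ` DA)" using go by (simp add: orth_compl_closure)
      then have "cinner (A h) g = 0" using h by (simp add: orth_compl_def)
      then show ?thesis using cinner_sym0 by blast
    qed
    define k where "k = z / (?w - z)"
    have k: "k * (?w - z) = z" using zf by (simp add: k_def)
    define \<psi> where "\<psi> = k *\<^sub>C \<phi>"
    have pD: "\<psi> \<in> DT" using csub_scale[OF DTs phD] by (simp add: \<psi>_def)
    have Tp: "T \<psi> = k *\<^sub>C T \<phi>" using lin_scale[OF linT phD] by (simp add: \<psi>_def)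
    define f where "f = (- z) *\<^sub>C f1"
    define f' where "f' = (- ?w) *\<^sub>C f2"
    have fD: "f \<in> DA" using csub_scale[OF DAs f1(1)] by (simp add: f_def)
    have f'D: "f' \<in> DA" using csub_scale[OF DAs f2(1)] by (simp add: f'_def)
    have Af: "A f = (- z) *\<^sub>C A f1" using lin_scale[OF LA f1(1)] by (simp add: f_def)
    have Af': "A f' = (- ?w) *\<^sub>C A f2" using lin_scale[OF LA f2(1)] by (simp add: f'_def)
    define x where "x = f + T \<psi> - \<psi>"
    define x' where "x' = f' + T \<psi> - \<psi>"
    have af1: "A f1 = g - \<phi> + z *\<^sub>C f1" using f1(2) by (simp add: algebra_simps)
    have af2: "A f2 = g - (z / ?w) *\<^sub>C T \<phi> + ?w *\<^sub>C f2" using f2(2) by (simp add: algebra_simps)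
    have Bx: "A f + z *\<^sub>C T \<psi> - ?w *\<^sub>C \<psi> = - z *\<^sub>C (g - x)"
      unfolding x_def Af Tp unfolding f_def \<psi>_def by (rule alg7[OF af1 k])
    have Bx': "A f' + z *\<^sub>C T \<psi> - ?w *\<^sub>C \<psi> = - ?w *\<^sub>C (g - x')"
      unfolding x'_def Af' Tp unfolding f'_def \<psi>_def by (rule alg8[OF af2 k zf(2)])
    define d' where "d' = g - x'"
    have d'N: "d' \<in> N_sp z DA A"
      unfolding mem_N
    proof
      fix h assume h: "h \<in> DA"
      have "cinner d' (A h) = cinner g (A h) - cinner x' (A h)"
        by (simp add: d'_def cinner_diff_left)
      also have "cinner x' (A h) = cinner (- ?w *\<^sub>C d') h"
        unfolding x'_def orth_RA[OF f'D pD h] Bx' d'_def ..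
      finally have "cinner d' (A h) = ?w * cinner d' h"
        using gA[OF h] by (simp add: cinner_scale_left cinner_minus_left)
      then have "cinner d' (A h - z *\<^sub>C h) = 0"
        by (simp add: cinner_diff_right cinner_scale_right)
      then show "cinner (A h - z *\<^sub>C h) d' = 0" using cinner_sym0 by blast
    qed
    define u where "u = f' - f"
    have uD: "u \<in> DA" using csubspace_diff[OF DAs f'D fD] by (simp add: u_def)
    have Au: "A u = A f' - A f" using lin_diff[OF LA f'D fD] by (simp add: u_def)
    have ue: "A u - z *\<^sub>C u = (z - ?w) *\<^sub>C d'"
      unfolding Au unfolding u_def d'_def x'_def
      by (rule alg9[OF Bx[unfolded x_def] Bx'[unfolded x'_def]])
    have "cinner (A u - z *\<^sub>C u) d' = 0" using M_orth_N[OF M_in[OF uD] d'N] .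
    then have "(z - ?w) * cinner d' d' = 0" unfolding ue by (simp add: cinner_scale_left)
    then have d0: "d' = 0" using zf by simp
    then have "A u - z *\<^sub>C u = 0" using ue by simp
    then have "u = 0" using cs_inj[OF cs imz uD] by simp
    then have xx: "x = x'" by (simp add: u_def x_def x'_def)
    then have gx: "g = x" using d0 by (simp add: d'_def)
    have B0: "A f + z *\<^sub>C T \<psi> - ?w *\<^sub>C \<psi> = 0" using Bx gx by simp
    have xD: "x \<in> ext_dom DA DT T" unfolding ext_dom_def x_def using fD pD by blast
    have zD: "0 \<in> ext_dom DA DT T"
    proof -
      have "(0::'h) = 0 + T 0 - 0" using lin_zero[OF linT] by simp
      then show ?thesis unfolding ext_dom_def using csub_zero[OF DAs] csub_zero[OF DTs] by blast
    qed
    have e1: "ext_op z DA A DT T x = 0" unfolding x_def ext_val[OF fD pD] B0 ..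
    have "ext_op z DA A DT T (0 + T 0 - 0) = A 0 + z *\<^sub>C T 0 - ?w *\<^sub>C 0"
      by (rule ext_val[OF csub_zero[OF DAs] csub_zero[OF DTs]])
    then have e0: "ext_op z DA A DT T 0 = 0" using lin_zero[OF linT] lin_zero[OF LA] by simp
    have "x = 0" using inj_onD[OF inj _ xD zD] e1 e0 by simp
    then have "g = 0" using gx by simp
    then have "\<phi> = 0" using pz proj_zero[OF N_sub, of z DA A] by simp
    then show False using ph0 by simp
  qed
  show ?thesis unfolding admissible_def using lin sub1 sub2 no by blast
qed

end

theorem theorem1:
  fixes DA DT :: "'h::chilbert set" and A T :: "'h \<Rightarrow> 'h" and z :: complex
  assumes "closed_symmetric DA A"
    and "inj_on A DA"
    and "Im z \<noteq> 0"
    and "lin_op DT T"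
    and "\<forall>\<psi>\<in>DT. norm (T \<psi>) \<le> norm \<psi>"
    and "DT \<subseteq> N_sp z DA A"
    and "T ` DT \<subseteq> N_sp (cnj z) DA A"
    and "admissible z DA A DT T"
  shows "inj_on (ext_op z DA A DT T) (ext_dom DA DT T) \<longleftrightarrow>
         admissible (1 / z) (A ` DA) (inv_op DA A) DT (\<lambda>\<psi>. (z / cnj z) *\<^sub>C T \<psi>)"
  using dir1[OF assms(1-4,6-8)] dir2[OF assms(1-4,6-8)] by blast

end
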